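(* Let $K$ be a field, $I\subset R=K[x_1,\ldots,x_n]$ a monomial ideal, and $h$ a monomial in $R$ such that $\gcd(h,u)=1$ for every minimal monomial generator $u$ of $I$. Then $I$ has the nearly copersistence property if and only if $hI$ has the nearly copersistence property.
   Context: A monomial ideal $I\subset R$ has the nearly copersistence property if there exist a positive integer $s$ and a monomial prime ideal $\mathfrak{p}$ such that $\mathrm{Ass}_R(R/I^m)\cup\{\mathfrak{p}\}\supseteq\mathrm{Ass}_R(R/I^{m+1})$ for all $1\le m\le s$, and $\mathrm{Ass}_R(R/I^m)\supseteq\mathrm{Ass}_R(R/I^{m+1})$ for all $m\ge s+1$. *)

theory Defs
  imports "HOL-Library.Poly_Mapping"
begin

(* Polynomial ring K[x_v : v in 'v] in the finitely many variables indexed by the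
   finite type 'v (so n = CARD('v)): polynomials are finitely supported maps from
   exponent vectors ('v \<Rightarrow>\<^sub>0 nat) to coefficients. *)
type_synonym ('v, 'k) mpoly = "('v \<Rightarrow>\<^sub>0 nat) \<Rightarrow>\<^sub>0 'k"

definition is_ideal :: "'a::comm_ring_1 set \<Rightarrow> bool" where
  "is_ideal I \<longleftrightarrow> 0 \<in> I \<and> (\<forall>a\<in>I. \<forall>b\<in>I. a + b \<in> I) \<and> (\<forall>r. \<forall>a\<in>I. r * a \<in> I)"

definition ideal_gen :: "'a::comm_ring_1 set \<Rightarrow> 'a set" where
  "ideal_gen S = \<Inter>{J. is_ideal J \<and> S \<subseteq> J}"

fun ideal_pow :: "'a::comm_ring_1 set \<Rightarrow> nat \<Rightarrow> 'a set" where
  "ideal_pow I 0 = UNIV"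
| "ideal_pow I (Suc m) = ideal_gen {a * b | a b. a \<in> I \<and> b \<in> ideal_pow I m}"

definition prime_ideal :: "'a::comm_ring_1 set \<Rightarrow> bool" where
  "prime_ideal P \<longleftrightarrow> is_ideal P \<and> P \<noteq> UNIV \<and> (\<forall>a b. a * b \<in> P \<longrightarrow> a \<in> P \<or> b \<in> P)"

(* Ass_R(R/I): prime ideals that are annihilators (I : f) of an element f + I of R/I *)
definition Ass :: "'a::comm_ring_1 set \<Rightarrow> 'a set set" where
  "Ass I = {P. prime_ideal P \<and> (\<exists>f. P = {g. g * f \<in> I})}"

definition monom :: "('v \<Rightarrow>\<^sub>0 nat) \<Rightarrow> ('v, 'k::comm_ring_1) mpoly" where
  "monom \<alpha> = Poly_Mapping.single \<alpha> 1"

definition is_monomial :: "('v, 'k::comm_ring_1) mpoly \<Rightarrow> bool" where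
  "is_monomial f \<longleftrightarrow> (\<exists>\<alpha>. f = monom \<alpha>)"

definition var :: "'v \<Rightarrow> ('v, 'k::comm_ring_1) mpoly" where
  "var i = monom (Poly_Mapping.single i 1)"

definition monomial_ideal :: "('v, 'k::comm_ring_1) mpoly set \<Rightarrow> bool" where
  "monomial_ideal I \<longleftrightarrow> is_ideal I \<and> I = ideal_gen {u \<in> I. is_monomial u}"

definition monomial_prime :: "('v, 'k::comm_ring_1) mpoly set \<Rightarrow> bool" where
  "monomial_prime P \<longleftrightarrow> (\<exists>A. P = ideal_gen (var ` A))"

definition min_mon_gens :: "('v, 'k::comm_ring_1) mpoly set \<Rightarrow> ('v, 'k) mpoly set" where
  "min_mon_gens I = {u \<in> I. is_monomial u \<and>
      (\<forall>v \<in> I. is_monomial v \<and> v dvd u \<longrightarrow> v = u)}"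

definition gcd_one :: "'a::comm_ring_1 \<Rightarrow> 'a \<Rightarrow> bool" where
  "gcd_one a b \<longleftrightarrow> (\<forall>d. d dvd a \<and> d dvd b \<longrightarrow> d dvd 1)"

definition nearly_copersistent :: "('v, 'k::comm_ring_1) mpoly set \<Rightarrow> bool" where
  "nearly_copersistent I \<longleftrightarrow> (\<exists>s::nat. s > 0 \<and> (\<exists>p. monomial_prime p \<and>
      (\<forall>m. 1 \<le> m \<and> m \<le> s \<longrightarrow> Ass (ideal_pow I m) \<union> {p} \<supseteq> Ass (ideal_pow I (m + 1))) \<and>
      (\<forall>m. m \<ge> s + 1 \<longrightarrow> Ass (ideal_pow I m) \<supseteq> Ass (ideal_pow I (m + 1)))))"

end

theory Submission
  imports Defs
begin


lemma lookup_single_mult_gen: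
  fixes b g :: "'v \<Rightarrow>\<^sub>0 nat" and q :: "('v \<Rightarrow>\<^sub>0 nat) \<Rightarrow>\<^sub>0 'k::comm_ring_1"
  shows "Poly_Mapping.lookup (Poly_Mapping.single b 1 * q) g = (\<Sum>x. Poly_Mapping.lookup q x when g = b + x)"
proof -
  have eq: "(\<lambda>a. (if b = a then 1 else 0) * (\<Sum>aa. if g = a + aa then Poly_Mapping.lookup q aa else (0::'k)))
     = (\<lambda>a. if a = b then (\<Sum>aa. if g = a + aa then Poly_Mapping.lookup q aa else (0::'k)) else 0)"
    by (auto simp: fun_eq_iff)
  show ?thesis
    unfolding Poly_Mapping.lookup_mult Poly_Mapping.lookup_single when_def eq by simp
qed

lemma lookup_single_mult_add:
  fixes b d :: "'v \<Rightarrow>\<^sub>0 nat" and q :: "('v \<Rightarrow>\<^sub>0 nat) \<Rightarrow>\<^sub>0 'k::comm_ring_1"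
  shows "Poly_Mapping.lookup (Poly_Mapping.single b 1 * q) (b + d) = Poly_Mapping.lookup q d"
proof -
  have "(\<lambda>x. Poly_Mapping.lookup q x when b + d = b + x) = (\<lambda>x. if x = d then Poly_Mapping.lookup q x else 0)"
    by (auto simp: fun_eq_iff when_def)
  then show ?thesis by (simp add: lookup_single_mult_gen)
qed

lemma lookup_single_mult_not:
  fixes b g :: "'v \<Rightarrow>\<^sub>0 nat" and q :: "('v \<Rightarrow>\<^sub>0 nat) \<Rightarrow>\<^sub>0 'k::comm_ring_1"
  assumes "\<not> (\<exists>d. g = b + d)"
  shows "Poly_Mapping.lookup (Poly_Mapping.single b 1 * q) g = 0"
proof -
  have eq: "(\<lambda>x. Poly_Mapping.lookup q x when g = b + x) = (\<lambda>x. 0)"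
    using assms by (auto simp: fun_eq_iff when_def)
  show ?thesis unfolding lookup_single_mult_gen eq by simp
qed


definition clean :: "('v \<Rightarrow>\<^sub>0 nat) \<Rightarrow> ('v \<Rightarrow>\<^sub>0 nat) \<Rightarrow> bool" where
  "clean a b \<longleftrightarrow> (\<forall>i. Poly_Mapping.lookup a i = 0 \<or> Poly_Mapping.lookup b i = 0)"

lemma clean_sym: "clean a b \<Longrightarrow> clean b a"
  unfolding clean_def by (simp add: disj_commute)

lemma clean_add: "clean a b \<Longrightarrow> clean a c \<Longrightarrow> clean a (b + c)"
proof -
  assume A: "clean a b" and B: "clean a c"
  show ?thesis unfolding clean_def
  proof
    fix i
    have "Poly_Mapping.lookup a i = 0 \<or> Poly_Mapping.lookup b i = 0" using A unfolding clean_def by (rule spec)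
    moreover have "Poly_Mapping.lookup a i = 0 \<or> Poly_Mapping.lookup c i = 0" using B unfolding clean_def by (rule spec)
    ultimately show "Poly_Mapping.lookup a i = 0 \<or> Poly_Mapping.lookup (b + c) i = 0"
      unfolding Poly_Mapping.lookup_add by arith
  qed
qed

lemma clean_zero: "clean a 0"
  unfolding clean_def by simp

lemma le_split:
  fixes b d :: "'v \<Rightarrow>\<^sub>0 nat"
  assumes "\<forall>i. Poly_Mapping.lookup b i \<le> Poly_Mapping.lookup d i"
  shows "d = b + (d - b)"
  by (rule poly_mapping_eqI) (use assms in \<open>simp add: Poly_Mapping.lookup_add Poly_Mapping.lookup_minus\<close>)

lemma clean_shift:
  fixes a b d e :: "'v \<Rightarrow>\<^sub>0 nat"
  assumes "clean a b" "a + d = b + e"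
  shows "\<exists>e'. d = b + e'"
proof -
  have "\<forall>i. Poly_Mapping.lookup b i \<le> Poly_Mapping.lookup d i"
  proof
    fix i
    have "Poly_Mapping.lookup (a + d) i = Poly_Mapping.lookup (b + e) i" using assms(2) by simp
    then show "Poly_Mapping.lookup b i \<le> Poly_Mapping.lookup d i"
      using assms(1) unfolding clean_def Poly_Mapping.lookup_add
    proof -
      assume "Poly_Mapping.lookup a i + Poly_Mapping.lookup d i = Poly_Mapping.lookup b i + Poly_Mapping.lookup e i"
        "\<forall>i. Poly_Mapping.lookup a i = 0 \<or> Poly_Mapping.lookup b i = 0"
      moreover have "Poly_Mapping.lookup a i = 0 \<or> Poly_Mapping.lookup b i = 0" using calculation(2) by (rule spec)
      ultimately show ?thesis by arith
    qed
  qed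
  then show ?thesis using le_split by (intro exI)
qed

definition divm :: "('v \<Rightarrow>\<^sub>0 nat) \<Rightarrow> ('v, 'k::comm_ring_1) mpoly \<Rightarrow> ('v, 'k) mpoly" where
  "divm a F = Abs_poly_mapping (\<lambda>d. Poly_Mapping.lookup F (a + d))"

lemma lookup_divm: "Poly_Mapping.lookup (divm a F) d = Poly_Mapping.lookup F (a + d)"
proof -
  have "{d. Poly_Mapping.lookup F (a + d) \<noteq> 0} = (\<lambda>d. a + d) -` {k. Poly_Mapping.lookup F k \<noteq> 0}"
    by auto
  moreover have "finite ((\<lambda>d. a + d) -` {k. Poly_Mapping.lookup F k \<noteq> 0})"
    by (rule finite_vimageI) (auto simp: inj_def)
  ultimately show ?thesis unfolding divm_def by simp
qed

lemma divm_monom_mult: "divm a (monom a * f) = f"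
  by (rule poly_mapping_eqI) (simp add: lookup_divm monom_def lookup_single_mult_add)

lemma divm_add: "divm a (F + G) = divm a F + divm a G"
  by (rule poly_mapping_eqI) (simp add: lookup_divm Poly_Mapping.lookup_add)

lemma divm_zero: "divm a 0 = 0"
  by (rule poly_mapping_eqI) (simp add: lookup_divm)

lemma divm_clean:
  assumes "clean a b"
  shows "divm a (r * monom b) = divm a r * monom b"
proof (rule poly_mapping_eqI)
  fix d
  show "Poly_Mapping.lookup (divm a (r * monom b)) d = Poly_Mapping.lookup (divm a r * monom b) d"
  proof (cases "\<exists>e. d = b + e")
    case True
    then obtain e where e: "d = b + e" by blast
    have "a + d = b + (a + e)" using e by (simp add: add_ac)
    then show ?thesis using e
      by (simp add: lookup_divm monom_def mult.commute[of _ "Poly_Mapping.single b 1"] lookup_single_mult_add)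
  next
    case False
    have "\<not> (\<exists>e. a + d = b + e)" using False clean_shift[OF assms, of d] by auto
    then show ?thesis using False
      by (simp add: lookup_divm monom_def mult.commute[of _ "Poly_Mapping.single b 1"] lookup_single_mult_not)
  qed
qed

lemma monom_dvd_iff:
  "(monom a dvd (F::('v, 'k::comm_ring_1) mpoly)) \<longleftrightarrow> (\<forall>g. Poly_Mapping.lookup F g \<noteq> 0 \<longrightarrow> (\<exists>e. g = a + e))"
proof
  assume "monom a dvd F"
  then obtain q where "F = monom a * q" by (auto elim: dvdE)
  then show "\<forall>g. Poly_Mapping.lookup F g \<noteq> 0 \<longrightarrow> (\<exists>e. g = a + e)"
  proof (intro allI impI)
    fix g assume "Poly_Mapping.lookup F g \<noteq> 0"
    then show "\<exists>e. g = a + e"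
      using lookup_single_mult_not[of g a q] \<open>F = monom a * q\<close> unfolding monom_def by argo
  qed
next
  assume H: "\<forall>g. Poly_Mapping.lookup F g \<noteq> 0 \<longrightarrow> (\<exists>e. g = a + e)"
  have "F = monom a * divm a F"
  proof (rule poly_mapping_eqI)
    fix g
    show "Poly_Mapping.lookup F g = Poly_Mapping.lookup (monom a * divm a F) g"
    proof (cases "\<exists>e. g = a + e")
      case True
      then obtain e where "g = a + e" by blast
      then show ?thesis by (simp add: monom_def lookup_single_mult_add lookup_divm)
    next
      case False
      then have "Poly_Mapping.lookup F g = 0" using H by auto
      moreover have "Poly_Mapping.lookup (monom a * divm a F) g = 0"
        unfolding monom_def by (rule lookup_single_mult_not) (use False in auto)
      ultimately show ?thesis by simp
    qed
  qed
  then show "monom a dvd F" by (rule dvdI)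
qed

lemma monom_cancel: "monom a * x = monom a * y \<Longrightarrow> x = y"
proof -
  assume "monom a * x = monom a * y"
  then have "divm a (monom a * x) = divm a (monom a * y)" by simp
  then show "x = y" by (simp only: divm_monom_mult)
qed

lemma monom_mult: "monom b * monom c = (monom (b + c) :: ('v, 'k::comm_ring_1) mpoly)"
  by (simp add: monom_def mult_single)

lemma monom_dvd_clean:
  fixes y :: "('v, 'k::comm_ring_1) mpoly"
  assumes "clean a c" "monom a dvd monom c * y"
  shows "monom a dvd y"
  unfolding monom_dvd_iff
proof (intro allI impI)
  fix g assume "Poly_Mapping.lookup y g \<noteq> 0"
  then have "Poly_Mapping.lookup (monom c * y) (c + g) \<noteq> 0"
    by (simp add: monom_def lookup_single_mult_add)
  then obtain e where "c + g = a + e" using assms(2) unfolding monom_dvd_iff by auto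
  then show "\<exists>e. g = a + e" using clean_shift[OF clean_sym[OF assms(1)], of g e] by auto
qed

lemma monom_dvd_monom:
  assumes "(monom b :: ('v, 'k::comm_ring_1) mpoly) dvd monom c"
  shows "\<exists>e. c = b + e"
proof -
  have "Poly_Mapping.lookup (monom c :: ('v, 'k) mpoly) c \<noteq> 0" by (simp add: monom_def)
  then show ?thesis using assms unfolding monom_dvd_iff by auto
qed

lemma var_not_unit: "\<not> ((var i :: ('v, 'k::comm_ring_1) mpoly) dvd 1)"
proof
  assume "(var i :: ('v, 'k) mpoly) dvd 1"
  then have "(var i :: ('v, 'k) mpoly) dvd monom 0" by (simp add: monom_def)
  then obtain e where "(0::'v \<Rightarrow>\<^sub>0 nat) = Poly_Mapping.single i 1 + e"
    unfolding var_def using monom_dvd_monom[of "Poly_Mapping.single i 1" 0] by auto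
  then have "Poly_Mapping.lookup (0::'v \<Rightarrow>\<^sub>0 nat) i = Poly_Mapping.lookup (Poly_Mapping.single i 1 + e) i"
    by simp
  then show False by (simp add: Poly_Mapping.lookup_add)
qed

lemma gcd_one_clean:
  assumes "gcd_one (monom a :: ('v, 'k::comm_ring_1) mpoly) (monom b)"
  shows "clean a b"
  unfolding clean_def
proof (rule ccontr)
  assume "\<not> (\<forall>i. Poly_Mapping.lookup a i = 0 \<or> Poly_Mapping.lookup b i = 0)"
  then obtain i where i: "Poly_Mapping.lookup a i \<noteq> 0" "Poly_Mapping.lookup b i \<noteq> 0" by auto
  have dv: "(var i :: ('v, 'k) mpoly) dvd monom c" if "Poly_Mapping.lookup c i \<noteq> 0" for c
  proof -
    have "c = Poly_Mapping.single i 1 + (c - Poly_Mapping.single i 1)"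
      by (rule le_split) (use that in \<open>auto simp: Poly_Mapping.lookup_single when_def\<close>)
    then have "monom c = (var i :: ('v, 'k) mpoly) * monom (c - Poly_Mapping.single i 1)"
      by (simp add: monom_mult var_def)
    then show ?thesis by (rule dvdI)
  qed
  have "(var i :: ('v, 'k) mpoly) dvd 1"
  proof -
    have "\<forall>d. d dvd monom a \<and> d dvd monom b \<longrightarrow> d dvd (1::('v, 'k) mpoly)"
      using assms unfolding gcd_one_def .
    then show ?thesis using dv[OF i(1)] dv[OF i(2)] by simp
  qed
  then show False by (rule notE[OF var_not_unit])
qed



lemma ideal_gen_ideal: "is_ideal (ideal_gen S)"
  unfolding is_ideal_def ideal_gen_def by auto

lemma ideal_gen_sub: "S \<subseteq> ideal_gen S"
  unfolding ideal_gen_def by auto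

lemma ideal_gen_min: "is_ideal J \<Longrightarrow> S \<subseteq> J \<Longrightarrow> ideal_gen S \<subseteq> J"
  unfolding ideal_gen_def by auto

lemma ideal_gen_mono: "S \<subseteq> T \<Longrightarrow> ideal_gen S \<subseteq> ideal_gen T"
  by (meson ideal_gen_ideal ideal_gen_min ideal_gen_sub order_trans)

lemma ideal_UNIV: "is_ideal UNIV"
  unfolding is_ideal_def by auto

lemma ideal_zero: "is_ideal {0::'a::comm_ring_1}"
  unfolding is_ideal_def by auto

lemma ideal_0: "is_ideal J \<Longrightarrow> 0 \<in> J"
  unfolding is_ideal_def by auto

lemma ideal_add: "is_ideal J \<Longrightarrow> a \<in> J \<Longrightarrow> b \<in> J \<Longrightarrow> a + b \<in> J"
  unfolding is_ideal_def by auto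

lemma ideal_mult: "is_ideal J \<Longrightarrow> a \<in> J \<Longrightarrow> r * a \<in> J"
  unfolding is_ideal_def by auto

lemma ideal_mult2: "is_ideal J \<Longrightarrow> a \<in> J \<Longrightarrow> a * r \<in> J"
  unfolding is_ideal_def by (metis mult.commute)

lemma ideal_pow_ideal: "is_ideal (ideal_pow I m)"
  by (cases m) (auto simp: ideal_UNIV ideal_gen_ideal)

lemma ideal_gen_one: "ideal_gen {1::'a::comm_ring_1} = UNIV"
proof -
  have "r \<in> ideal_gen {1}" for r :: 'a
    using ideal_mult[OF ideal_gen_ideal, of 1 "{1}" r] ideal_gen_sub[of "{1::'a}"] by auto
  then show ?thesis by auto
qed

lemma ideal_colon: "is_ideal J \<Longrightarrow> is_ideal {x. c * x \<in> (J::'a::comm_ring_1 set)}"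
proof -
  assume J: "is_ideal J"
  show ?thesis unfolding is_ideal_def
  proof (intro conjI ballI allI)
    show "0 \<in> {x. c * x \<in> J}" using ideal_0[OF J] by simp
    fix a b assume "a \<in> {x. c * x \<in> J}" "b \<in> {x. c * x \<in> J}"
    then show "a + b \<in> {x. c * x \<in> J}" using ideal_add[OF J, of "c*a" "c*b"] by (simp add: distrib_left)
  next
    fix r a assume "a \<in> {x. c * x \<in> J}"
    then show "r * a \<in> {x. c * x \<in> J}" using ideal_mult[OF J, of "c*a" r] by (simp add: mult.left_commute)
  qed
qed

lemma ideal_image: "is_ideal J \<Longrightarrow> is_ideal ((\<lambda>f. c * f) ` (J::'a::comm_ring_1 set))"
proof -
  assume J: "is_ideal J"
  show ?thesis unfolding is_ideal_def
  proof (intro conjI ballI allI)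
    have "c * 0 \<in> (*) c ` J" using ideal_0[OF J] by (rule imageI)
    then show "0 \<in> (*) c ` J" by simp
    fix a b assume "a \<in> (*) c ` J" "b \<in> (*) c ` J"
    then obtain x y where xy: "x \<in> J" "y \<in> J" "a = c * x" "b = c * y" by auto
    have "c * (x + y) \<in> (*) c ` J" using ideal_add[OF J xy(1,2)] by (rule imageI)
    then show "a + b \<in> (*) c ` J" using xy by (simp add: distrib_left)
  next
    fix r a assume "a \<in> (*) c ` J"
    then obtain x where x: "x \<in> J" "a = c * x" by auto
    have "c * (r * x) \<in> (*) c ` J" using ideal_mult[OF J x(1)] by (rule imageI)
    then show "r * a \<in> (*) c ` J" using x by (simp add: mult.left_commute)
  qed
qed

lemma ideal_gen_image:
  "ideal_gen ((\<lambda>f. c * f) ` S) = (\<lambda>f. c * f) ` ideal_gen (S::'a::comm_ring_1 set)"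
proof
  show "ideal_gen ((*) c ` S) \<subseteq> (*) c ` ideal_gen S"
    by (intro ideal_gen_min ideal_image ideal_gen_ideal image_mono ideal_gen_sub)
  have "is_ideal {x. c * x \<in> ideal_gen ((*) c ` S)}"
    by (rule ideal_colon[OF ideal_gen_ideal])
  moreover have "S \<subseteq> {x. c * x \<in> ideal_gen ((*) c ` S)}"
    using ideal_gen_sub[of "(*) c ` S"] by auto
  ultimately have "ideal_gen S \<subseteq> {x. c * x \<in> ideal_gen ((*) c ` S)}"
    by (rule ideal_gen_min)
  then show "(*) c ` ideal_gen S \<subseteq> ideal_gen ((*) c ` S)" by auto
qed



lemma ideal_pow_image:
  assumes "is_ideal (I::'a::comm_ring_1 set)"
  shows "ideal_pow ((\<lambda>f. h * f) ` I) m = (\<lambda>f. h ^ m * f) ` ideal_pow I m"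
proof (induction m)
  case 0
  then show ?case by simp
next
  case (Suc m)
  have eq: "{a * b |a b. a \<in> (*) h ` I \<and> b \<in> (*) (h ^ m) ` ideal_pow I m}
      = (*) (h ^ Suc m) ` {a * b |a b. a \<in> I \<and> b \<in> ideal_pow I m}"
  proof (intro equalityI subsetI)
    fix x assume "x \<in> {a * b |a b. a \<in> (*) h ` I \<and> b \<in> (*) (h ^ m) ` ideal_pow I m}"
    then obtain a b where ab: "a \<in> I" "b \<in> ideal_pow I m" "x = (h * a) * (h ^ m * b)" by auto
    have "(h * a) * (h ^ m * b) = h ^ Suc m * (a * b)" by (simp add: algebra_simps)
    moreover have "a * b \<in> {a * b |a b. a \<in> I \<and> b \<in> ideal_pow I m}" using ab by auto
    ultimately show "x \<in> (*) (h ^ Suc m) ` {a * b |a b. a \<in> I \<and> b \<in> ideal_pow I m}"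
      using ab(3) by (simp only: image_eqI)
  next
    fix x assume "x \<in> (*) (h ^ Suc m) ` {a * b |a b. a \<in> I \<and> b \<in> ideal_pow I m}"
    then obtain a b where ab: "a \<in> I" "b \<in> ideal_pow I m" "x = h ^ Suc m * (a * b)" by auto
    have "(h * a) * (h ^ m * b) = h ^ Suc m * (a * b)" by (simp add: algebra_simps)
    moreover have "h * a \<in> (*) h ` I" "h ^ m * b \<in> (*) (h ^ m) ` ideal_pow I m" using ab by auto
    ultimately show "x \<in> {a * b |a b. a \<in> (*) h ` I \<and> b \<in> (*) (h ^ m) ` ideal_pow I m}"
      unfolding mem_Collect_eq
      by (intro exI[where x="h*a"] exI[where x="h^m*b"] conjI) (simp_all only: ab(3))
  qed
  have "ideal_pow ((*) h ` I) (Suc m) = ideal_gen {a * b |a b. a \<in> (*) h ` I \<and> b \<in> ideal_pow ((*) h ` I) m}"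
    by (simp only: ideal_pow.simps)
  also have "\<dots> = ideal_gen ((*) (h ^ Suc m) ` {a * b |a b. a \<in> I \<and> b \<in> ideal_pow I m})"
    by (simp only: Suc eq)
  also have "\<dots> = (*) (h ^ Suc m) ` ideal_pow I (Suc m)"
    by (simp only: ideal_gen_image ideal_pow.simps)
  finally show ?case .
qed

lemma pow_in_ideal_pow: "v \<in> I \<Longrightarrow> v ^ m \<in> ideal_pow I m"
proof (induction m)
  case 0 then show ?case by simp
next
  case (Suc m)
  then have "v * v ^ m \<in> {a * b |a b. a \<in> I \<and> b \<in> ideal_pow I m}" by blast
  then have "v * v ^ m \<in> ideal_gen {a * b |a b. a \<in> I \<and> b \<in> ideal_pow I m}"
    by (rule subsetD[OF ideal_gen_sub])
  then show ?case by simp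
qed

lemma ideal_gen_prod:
  "ideal_gen {a * b | a b. a \<in> ideal_gen S \<and> b \<in> ideal_gen T}
   = ideal_gen {s * t | s t. s \<in> S \<and> t \<in> (T::'a::comm_ring_1 set)}"
proof
  let ?G = "ideal_gen {s * t | s t. s \<in> S \<and> t \<in> T}"
  have gi: "is_ideal ?G" by (rule ideal_gen_ideal)
  have st: "s * t \<in> ?G" if "s \<in> S" "t \<in> T" for s t
  proof -
    have "s * t \<in> {s * t | s t. s \<in> S \<and> t \<in> T}" using that by auto
    then show ?thesis by (rule subsetD[OF ideal_gen_sub])
  qed
  have at: "a * t \<in> ?G" if "a \<in> ideal_gen S" "t \<in> T" for a t
  proof -
    have "is_ideal {x. x * t \<in> ?G}"
      using ideal_colon[OF gi, of t] by (simp add: mult.commute)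
    moreover have "S \<subseteq> {x. x * t \<in> ?G}" using st that(2) by auto
    ultimately have "ideal_gen S \<subseteq> {x. x * t \<in> ?G}" by (rule ideal_gen_min)
    then show ?thesis using that(1) by auto
  qed
  have ab: "a * b \<in> ?G" if "a \<in> ideal_gen S" "b \<in> ideal_gen T" for a b
  proof -
    have "is_ideal {y. a * y \<in> ?G}"
      by (rule ideal_colon[OF gi])
    moreover have "T \<subseteq> {y. a * y \<in> ?G}" using at that(1) by auto
    ultimately have "ideal_gen T \<subseteq> {y. a * y \<in> ?G}" by (rule ideal_gen_min)
    then show ?thesis using that(2) by auto
  qed
  show "ideal_gen {a * b |a b. a \<in> ideal_gen S \<and> b \<in> ideal_gen T} \<subseteq> ?G"
    by (rule ideal_gen_min[OF gi]) (use ab in auto)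
  have "{s * t | s t. s \<in> S \<and> t \<in> T} \<subseteq> {a * b |a b. a \<in> ideal_gen S \<and> b \<in> ideal_gen T}"
    using ideal_gen_sub[of S] ideal_gen_sub[of T] by auto
  then show "?G \<subseteq> ideal_gen {a * b |a b. a \<in> ideal_gen S \<and> b \<in> ideal_gen T}"
    by (rule ideal_gen_mono)
qed



definition Dh :: "'a::comm_ring_1 \<Rightarrow> 'a set set" where
  "Dh h = {P. prime_ideal P \<and> (\<exists>f. P = {g. h dvd g * f})}"

lemma nzd_pow:
  fixes h :: "'a::comm_ring_1"
  assumes "\<forall>f. h * f \<in> J \<longrightarrow> f \<in> J"
  shows "h ^ n * f \<in> J \<Longrightarrow> f \<in> J"
proof (induction n arbitrary: f)
  case 0 then show ?case by simp
next
  case (Suc n)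
  have "h * (h ^ n * f) \<in> J" using Suc.prems by (simp add: mult.assoc)
  then have "h ^ n * f \<in> J" using assms by simp
  then show ?case by (rule Suc.IH)
qed

lemma canc_pow:
  fixes h :: "'a::comm_ring_1"
  assumes "\<forall>x y. h * x = h * y \<longrightarrow> x = y"
  shows "h ^ n * x = h ^ n * y \<Longrightarrow> x = y"
proof (induction n arbitrary: x y)
  case 0 then show ?case by simp
next
  case (Suc n)
  have "h * (h ^ n * x) = h * (h ^ n * y)" using Suc.prems by (simp add: mult.assoc)
  then have "h ^ n * x = h ^ n * y" using assms by simp
  then show ?case by (rule Suc.IH)
qed

lemma prime_pow: "prime_ideal (P::'a::comm_ring_1 set) \<Longrightarrow> h ^ n \<in> P \<Longrightarrow> h \<in> P"
proof (induction n)
  case 0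
  then have "1 \<in> P" by simp
  then have "r \<in> P" for r using ideal_mult[of P 1 r] 0(1) unfolding prime_ideal_def by simp
  then show ?case using 0(1) unfolding prime_ideal_def by auto
next
  case (Suc n)
  then have "h \<in> P \<or> h ^ n \<in> P" unfolding prime_ideal_def by simp
  then show ?case using Suc by auto
qed

lemma prime_inter:
  assumes P: "prime_ideal P" and eq: "P = A \<inter> B"
    and A: "\<forall>r a. a \<in> A \<longrightarrow> r * a \<in> A" and B: "\<forall>r a. a \<in> B \<longrightarrow> r * a \<in> B"
  shows "P = A \<or> P = B"
proof (rule ccontr)
  assume "\<not> (P = A \<or> P = B)"
  then obtain a b where a: "a \<in> A" "a \<notin> P" and b: "b \<in> B" "b \<notin> P" using eq by auto
  have "a * b \<in> A" using A a(1) by (metis mult.commute)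
  moreover have "a * b \<in> B" using B b(1) by auto
  ultimately have "a * b \<in> P" using eq by auto
  then show False using P a(2) b(2) unfolding prime_ideal_def by auto
qed

lemma dvd_cancel:
  fixes h :: "'a::comm_ring_1"
  assumes canc: "\<forall>x y. h * x = h * y \<longrightarrow> x = y"
  shows "(h ^ Suc k dvd g * (h ^ k * y)) \<longleftrightarrow> (h dvd g * y)"
proof
  assume "h ^ Suc k dvd g * (h ^ k * y)"
  then obtain t where "g * (h ^ k * y) = h ^ Suc k * t" by (auto elim: dvdE)
  then have "h ^ k * (g * y) = h ^ k * (h * t)" by (simp add: algebra_simps)
  then have "g * y = h * t" by (rule canc_pow[OF canc])
  then show "h dvd g * y" by simp
next
  assume "h dvd g * y"
  then obtain t where "g * y = h * t" by (auto elim: dvdE)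
  then have "g * (h ^ k * y) = h ^ Suc k * t"
    by (metis mult.assoc mult.left_commute power_Suc)
  then show "h ^ Suc k dvd g * (h ^ k * y)" by simp
qed

lemma Ass_image:
  fixes J :: "'a::comm_ring_1 set"
  assumes canc: "\<forall>x y. h * x = h * y \<longrightarrow> x = y"
    and J: "is_ideal J" and nzd: "\<forall>f. h * f \<in> J \<longrightarrow> f \<in> J"
    and u: "u \<in> J" and uprop: "\<forall>y. h dvd u * y \<longrightarrow> h dvd y"
    and m: "m = Suc k"
  shows "Ass ((\<lambda>f. h ^ m * f) ` J) = Ass J \<union> Dh h"
proof -
  have mem: "x \<in> (\<lambda>f. h ^ m * f) ` J \<longleftrightarrow> (h ^ m dvd x \<and> x \<in> J)" for x
  proof
    assume "x \<in> (\<lambda>f. h ^ m * f) ` J"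
    then obtain j where "j \<in> J" "x = h ^ m * j" by auto
    then show "h ^ m dvd x \<and> x \<in> J" using ideal_mult[OF J] by auto
  next
    assume "h ^ m dvd x \<and> x \<in> J"
    then obtain r where r: "x = h ^ m * r" "h ^ m * r \<in> J" by (auto elim: dvdE)
    then have "r \<in> J" using nzd_pow[OF nzd] by blast
    then show "x \<in> (\<lambda>f. h ^ m * f) ` J" using r by auto
  qed
  have colon: "{g. g * f \<in> (\<lambda>f. h ^ m * f) ` J} = {g. h ^ m dvd g * f} \<inter> {g. g * f \<in> J}" for f
    using mem by auto
  show ?thesis
  proof (intro equalityI subsetI)
    fix P assume "P \<in> Ass ((\<lambda>f. h ^ m * f) ` J)"
    then obtain f where P: "prime_ideal P" and Pf: "P = {g. g * f \<in> (\<lambda>f. h ^ m * f) ` J}"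
      unfolding Ass_def by auto
    have A1: "\<forall>r a. a \<in> {g. h ^ m dvd g * f} \<longrightarrow> r * a \<in> {g. h ^ m dvd g * f}"
      by (auto simp: mult.assoc)
    have B1: "\<forall>r a. a \<in> {g. g * f \<in> J} \<longrightarrow> r * a \<in> {g. g * f \<in> J}"
      using ideal_mult[OF J] by (auto simp: mult.assoc)
    from prime_inter[OF P Pf[unfolded colon] A1 B1]
    show "P \<in> Ass J \<union> Dh h"
    proof
      assume "P = {g. g * f \<in> J}"
      then show ?thesis using P unfolding Ass_def by auto
    next
      assume PA: "P = {g. h ^ m dvd g * f}"
      have "h ^ m \<in> P" using PA by auto
      then have "h \<in> P" using prime_pow[OF P] by blast
      then have "h ^ Suc k dvd h * f" using PA m by auto
      then obtain t where "h * f = h ^ Suc k * t" by (auto elim: dvdE)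
      then have "h * f = h * (h ^ k * t)" by (simp add: algebra_simps)
      then have ft: "f = h ^ k * t" using canc by blast
      have "P = {g. h dvd g * t}" using PA m ft dvd_cancel[OF canc] by auto
      then show ?thesis using P unfolding Dh_def by auto
    qed
  next
    fix P assume "P \<in> Ass J \<union> Dh h"
    then show "P \<in> Ass ((\<lambda>f. h ^ m * f) ` J)"
    proof
      assume "P \<in> Ass J"
      then obtain f where P: "prime_ideal P" and Pf: "P = {g. g * f \<in> J}"
        unfolding Ass_def by auto
      have "{g. g * (h ^ m * f) \<in> (\<lambda>f. h ^ m * f) ` J} = P"
      proof -
        have "g * (h ^ m * f) \<in> J \<longleftrightarrow> g * f \<in> J" for g
        proof
          assume "g * (h ^ m * f) \<in> J"
          then have "h ^ m * (g * f) \<in> J" by (simp add: algebra_simps)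
          then show "g * f \<in> J" using nzd_pow[OF nzd] by blast
        next
          assume "g * f \<in> J"
          then have "h ^ m * (g * f) \<in> J" using ideal_mult[OF J] by blast
          then show "g * (h ^ m * f) \<in> J" by (simp add: algebra_simps)
        qed
        then show ?thesis unfolding colon Pf by auto
      qed
      then show ?thesis using P unfolding Ass_def by auto
    next
      assume "P \<in> Dh h"
      then obtain f where P: "prime_ideal P" and Pf: "P = {g. h dvd g * f}"
        unfolding Dh_def by auto
      have "{g. g * (h ^ k * (f * u)) \<in> (\<lambda>f. h ^ m * f) ` J} = P"
      proof -
        have "g * (h ^ k * (f * u)) \<in> J" for g
          using ideal_mult[OF J u, of "g * h ^ k * f"] by (simp add: algebra_simps)
        moreover have "h ^ m dvd g * (h ^ k * (f * u)) \<longleftrightarrow> h dvd g * f" for g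
        proof -
          have "h ^ m dvd g * (h ^ k * (f * u)) \<longleftrightarrow> h dvd g * (f * u)"
            using dvd_cancel[OF canc] m by simp
          also have "\<dots> \<longleftrightarrow> h dvd g * f"
          proof
            assume "h dvd g * (f * u)"
            then have "h dvd u * (g * f)" by (simp add: algebra_simps)
            then show "h dvd g * f" using uprop by blast
          next
            assume "h dvd g * f"
            then show "h dvd g * (f * u)" by (metis dvd_mult2 mult.assoc)
          qed
          finally show ?thesis .
        qed
        ultimately show ?thesis unfolding colon Pf by auto
      qed
      then show ?thesis using P unfolding Ass_def by auto
    qed
  qed
qed

lemma Ass_Dh_disjoint:
  fixes J :: "'a::comm_ring_1 set"
  assumes J: "is_ideal J" and nzd: "\<forall>f. h * f \<in> J \<longrightarrow> f \<in> J"
  shows "Ass J \<inter> Dh h = {}"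
proof (rule ccontr)
  assume "Ass J \<inter> Dh h \<noteq> {}"
  then obtain P f f' where P: "prime_ideal P" and Pf: "P = {g. g * f \<in> J}"
    and Pf': "P = {g. h dvd g * f'}"
    unfolding Ass_def Dh_def by auto
  have "h \<in> P" using Pf' by auto
  then have "h * f \<in> J" using Pf by auto
  then have "f \<in> J" using nzd by blast
  then have "1 \<in> P" using Pf by auto
  then have "r \<in> P" for r using ideal_mult[of P 1 r] P unfolding prime_ideal_def by simp
  then show False using P unfolding prime_ideal_def by auto
qed



definition CleanMon :: "('v \<Rightarrow>\<^sub>0 nat) \<Rightarrow> ('v, 'k::comm_ring_1) mpoly set" where
  "CleanMon a = {monom b | b. clean a b}"

lemma nzd_clean:
  fixes G :: "('v, 'k::comm_ring_1) mpoly set"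
  assumes G: "G \<subseteq> CleanMon a"
  shows "\<forall>f. monom a * f \<in> ideal_gen G \<longrightarrow> f \<in> ideal_gen G"
proof -
  let ?J = "ideal_gen G"
  have Ji: "is_ideal ?J" by (rule ideal_gen_ideal)
  let ?T = "{F. \<forall>r. divm a (r * F) \<in> ?J}"
  have "is_ideal ?T"
    unfolding is_ideal_def
  proof (intro conjI ballI allI)
    show "0 \<in> ?T" using ideal_0[OF Ji] by (simp add: divm_zero)
    fix x y assume "x \<in> ?T" "y \<in> ?T"
    then show "x + y \<in> ?T" using ideal_add[OF Ji] by (simp add: distrib_left divm_add)
  next
    fix r x assume "x \<in> ?T"
    then show "r * x \<in> ?T" by (simp add: mult.assoc[symmetric])
  qed
  moreover have "G \<subseteq> ?T"
  proof
    fix g assume "g \<in> G"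
    then obtain b where b: "g = monom b" "clean a b" using G unfolding CleanMon_def by auto
    have "g \<in> ?J" using \<open>g \<in> G\<close> ideal_gen_sub by auto
    then have "divm a r * g \<in> ?J" for r using ideal_mult[OF Ji] by auto
    then have "divm a r * monom b \<in> ?J" for r using b(1) by simp
    then have "divm a (r * monom b) \<in> ?J" for r using divm_clean[OF b(2), of r] by simp
    then show "g \<in> ?T" using b(1) by simp
  qed
  ultimately have sub: "?J \<subseteq> ?T" by (rule ideal_gen_min)
  show ?thesis
  proof (intro allI impI)
    fix f assume "monom a * f \<in> ?J"
    then have "monom a * f \<in> ?T" by (rule subsetD[OF sub])
    then have "\<forall>r. divm a (r * (monom a * f)) \<in> ?J" by simp
    then have "divm a (1 * (monom a * f)) \<in> ?J" by (rule spec)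
    then show "f \<in> ?J" by (simp add: divm_monom_mult)
  qed
qed

definition degm :: "('v::finite \<Rightarrow>\<^sub>0 nat) \<Rightarrow> nat" where
  "degm b = (\<Sum>i\<in>UNIV. Poly_Mapping.lookup b i)"

lemma degm_add: "degm (b + c) = degm b + degm c"
  unfolding degm_def by (simp add: Poly_Mapping.lookup_add sum.distrib)

lemma degm_pos: "e \<noteq> 0 \<Longrightarrow> degm e > 0"
proof -
  assume "e \<noteq> 0"
  then obtain i where "Poly_Mapping.lookup e i \<noteq> 0"
    by (metis poly_mapping_eqI lookup_zero)
  then show ?thesis unfolding degm_def
    by (metis (no_types) finite_UNIV gr0I iso_tuple_UNIV_I sum_eq_0_iff)
qed

lemma exists_min_gen:
  fixes I :: "('v::finite, 'k::comm_ring_1) mpoly set"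
  shows "monom b \<in> I \<Longrightarrow> \<exists>v \<in> min_mon_gens I. v dvd monom b"
proof (induction "degm b" arbitrary: b rule: less_induct)
  case less
  show ?case
  proof (cases "monom b \<in> min_mon_gens I")
    case True
    have "monom b dvd monom b" by (rule dvd_refl)
    with True show ?thesis by (rule bexI[rotated])
  next
    case False
    then obtain v where v: "v \<in> I" "is_monomial v" "v dvd monom b" "v \<noteq> monom b"
      using less.prems unfolding min_mon_gens_def is_monomial_def by auto
    then obtain c where c: "v = monom c" unfolding is_monomial_def by auto
    then obtain e where e: "b = c + e" using monom_dvd_monom v(3) by blast
    have "e \<noteq> 0" using e c v(4) by auto
    then have "degm c < degm b" using e degm_add[of c e] degm_pos[of e] by simp
    then obtain w where "w \<in> min_mon_gens I" "w dvd monom c" using less.hyps v(1) c by blast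
    then show ?thesis using v(3) c dvd_trans by blast
  qed
qed

lemma min_gens_generate:
  fixes I :: "('v::finite, 'k::comm_ring_1) mpoly set"
  assumes "monomial_ideal I"
  shows "I = ideal_gen (min_mon_gens I)"
proof
  have Ii: "is_ideal I" using assms unfolding monomial_ideal_def by auto
  show "ideal_gen (min_mon_gens I) \<subseteq> I"
    by (rule ideal_gen_min[OF Ii]) (auto simp: min_mon_gens_def)
  have "{u \<in> I. is_monomial u} \<subseteq> ideal_gen (min_mon_gens I)"
  proof
    fix u assume "u \<in> {u \<in> I. is_monomial u}"
    then obtain b where "u = monom b" "monom b \<in> I" unfolding is_monomial_def by auto
    then obtain v where v: "v \<in> min_mon_gens I" "v dvd u" using exists_min_gen by blast
    then obtain q where "u = v * q" by (auto elim: dvdE)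
    moreover have "v \<in> ideal_gen (min_mon_gens I)" using v(1) ideal_gen_sub by auto
    ultimately show "u \<in> ideal_gen (min_mon_gens I)" using ideal_mult2[OF ideal_gen_ideal] by auto
  qed
  then have "ideal_gen {u \<in> I. is_monomial u} \<subseteq> ideal_gen (min_mon_gens I)"
    by (rule ideal_gen_min[OF ideal_gen_ideal])
  then show "I \<subseteq> ideal_gen (min_mon_gens I)"
    using assms unfolding monomial_ideal_def by auto
qed

lemma min_gens_clean:
  fixes I :: "('v::finite, 'k::comm_ring_1) mpoly set"
  assumes "\<forall>u \<in> min_mon_gens I. gcd_one (monom a) u"
  shows "min_mon_gens I \<subseteq> CleanMon a"
proof
  fix u assume u: "u \<in> min_mon_gens I"
  then obtain b where b: "u = monom b" unfolding min_mon_gens_def is_monomial_def by auto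
  then have "clean a b" using gcd_one_clean assms u by metis
  then show "u \<in> CleanMon a" using b unfolding CleanMon_def by auto
qed

lemma pow_clean_gen:
  fixes I :: "('v::finite, 'k::comm_ring_1) mpoly set"
  assumes "monomial_ideal I" "\<forall>u \<in> min_mon_gens I. gcd_one (monom a) u"
  shows "\<exists>G. ideal_pow I m = ideal_gen G \<and> G \<subseteq> CleanMon a"
proof (induction m)
  case 0
  have "(1::('v, 'k) mpoly) = monom 0" by (simp add: monom_def)
  then have "{1::('v, 'k) mpoly} \<subseteq> CleanMon a" unfolding CleanMon_def using clean_zero by auto
  then show ?case using ideal_gen_one by (metis ideal_pow.simps(1))
next
  case (Suc m)
  then obtain G where G: "ideal_pow I m = ideal_gen G" "G \<subseteq> CleanMon a" by auto
  let ?S = "min_mon_gens I"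
  have S: "I = ideal_gen ?S" by (rule min_gens_generate[OF assms(1)])
  have Sc: "?S \<subseteq> CleanMon a" by (rule min_gens_clean[OF assms(2)])
  have "ideal_pow I (Suc m) = ideal_gen {x * y |x y. x \<in> ideal_gen ?S \<and> y \<in> ideal_gen G}"
    using G(1) S by simp
  also have "\<dots> = ideal_gen {s * t |s t. s \<in> ?S \<and> t \<in> G}" by (rule ideal_gen_prod)
  finally have eq: "ideal_pow I (Suc m) = ideal_gen {s * t |s t. s \<in> ?S \<and> t \<in> G}" .
  have "{s * t |s t. s \<in> ?S \<and> t \<in> G} \<subseteq> CleanMon a"
  proof
    fix x assume "x \<in> {s * t |s t. s \<in> ?S \<and> t \<in> G}"
    then obtain s t where st: "s \<in> ?S" "t \<in> G" "x = s * t" by auto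
    obtain b c where "s = monom b" "clean a b" "t = monom c" "clean a c"
      using st Sc G(2) unfolding CleanMon_def by blast
    then show "x \<in> CleanMon a" using st(3) monom_mult clean_add unfolding CleanMon_def by fastforce
  qed
  then show ?case using eq by blast
qed

lemma upow_prop:
  fixes v y :: "('v, 'k::comm_ring_1) mpoly"
  assumes "clean a b"
  shows "monom a dvd monom b ^ m * y \<Longrightarrow> monom a dvd y"
proof (induction m arbitrary: y)
  case 0 then show ?case by simp
next
  case (Suc m)
  have "monom a dvd monom b * (monom b ^ m * y)" using Suc.prems by (simp add: mult.assoc)
  then have "monom a dvd monom b ^ m * y" by (rule monom_dvd_clean[OF assms])
  then show ?case by (rule Suc.IH)
qed

lemma cond_equiv:
  assumes BA: "\<And>m. m \<ge> 1 \<Longrightarrow> B m = A m \<union> D" and dis: "\<And>m. m \<ge> 1 \<Longrightarrow> A m \<inter> D = {}"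
  shows "(\<exists>s::nat. s > 0 \<and> (\<exists>p. Q p \<and>
      (\<forall>m. 1 \<le> m \<and> m \<le> s \<longrightarrow> A m \<union> {p} \<supseteq> A (m + 1)) \<and>
      (\<forall>m. m \<ge> s + 1 \<longrightarrow> A m \<supseteq> A (m + 1))))
    \<longleftrightarrow> (\<exists>s::nat. s > 0 \<and> (\<exists>p. Q p \<and>
      (\<forall>m. 1 \<le> m \<and> m \<le> s \<longrightarrow> B m \<union> {p} \<supseteq> B (m + 1)) \<and>
      (\<forall>m. m \<ge> s + 1 \<longrightarrow> B m \<supseteq> B (m + 1))))"
proof
  assume "\<exists>s::nat. s > 0 \<and> (\<exists>p. Q p \<and>
      (\<forall>m. 1 \<le> m \<and> m \<le> s \<longrightarrow> A m \<union> {p} \<supseteq> A (m + 1)) \<and>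
      (\<forall>m. m \<ge> s + 1 \<longrightarrow> A m \<supseteq> A (m + 1)))"
  then obtain s p where s: "s > 0" "Q p" and h1: "\<forall>m. 1 \<le> m \<and> m \<le> s \<longrightarrow> A m \<union> {p} \<supseteq> A (m + 1)"
    and h2: "\<forall>m. m \<ge> s + 1 \<longrightarrow> A m \<supseteq> A (m + 1)" by auto
  have "\<forall>m. 1 \<le> m \<and> m \<le> s \<longrightarrow> B m \<union> {p} \<supseteq> B (m + 1)"
  proof (intro allI impI)
    fix m assume m: "1 \<le> m \<and> m \<le> s"
    then have "A m \<union> {p} \<supseteq> A (m + 1)" using h1 by auto
    then show "B m \<union> {p} \<supseteq> B (m + 1)" using BA[of m] BA[of "m+1"] m by auto
  qed
  moreover have "\<forall>m. m \<ge> s + 1 \<longrightarrow> B m \<supseteq> B (m + 1)"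
  proof (intro allI impI)
    fix m assume m: "m \<ge> s + 1"
    then have "A m \<supseteq> A (m + 1)" using h2 by auto
    then show "B m \<supseteq> B (m + 1)" using BA[of m] BA[of "m+1"] m by auto
  qed
  ultimately show "\<exists>s::nat. s > 0 \<and> (\<exists>p. Q p \<and>
      (\<forall>m. 1 \<le> m \<and> m \<le> s \<longrightarrow> B m \<union> {p} \<supseteq> B (m + 1)) \<and>
      (\<forall>m. m \<ge> s + 1 \<longrightarrow> B m \<supseteq> B (m + 1)))" using s by blast
next
  assume "\<exists>s::nat. s > 0 \<and> (\<exists>p. Q p \<and>
      (\<forall>m. 1 \<le> m \<and> m \<le> s \<longrightarrow> B m \<union> {p} \<supseteq> B (m + 1)) \<and>
      (\<forall>m. m \<ge> s + 1 \<longrightarrow> B m \<supseteq> B (m + 1)))"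
  then obtain s p where s: "s > 0" "Q p" and h1: "\<forall>m. 1 \<le> m \<and> m \<le> s \<longrightarrow> B m \<union> {p} \<supseteq> B (m + 1)"
    and h2: "\<forall>m. m \<ge> s + 1 \<longrightarrow> B m \<supseteq> B (m + 1)" by auto
  have "\<forall>m. 1 \<le> m \<and> m \<le> s \<longrightarrow> A m \<union> {p} \<supseteq> A (m + 1)"
  proof (intro allI impI)
    fix m assume m: "1 \<le> m \<and> m \<le> s"
    then have "B m \<union> {p} \<supseteq> B (m + 1)" using h1 by auto
    then show "A m \<union> {p} \<supseteq> A (m + 1)" using BA[of m] BA[of "m+1"] dis[of "m+1"] m by auto
  qed
  moreover have "\<forall>m. m \<ge> s + 1 \<longrightarrow> A m \<supseteq> A (m + 1)"
  proof (intro allI impI)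
    fix m assume m: "m \<ge> s + 1"
    then have "B m \<supseteq> B (m + 1)" using h2 by auto
    then show "A m \<supseteq> A (m + 1)" using BA[of m] BA[of "m+1"] dis[of "m+1"] m by auto
  qed
  ultimately show "\<exists>s::nat. s > 0 \<and> (\<exists>p. Q p \<and>
      (\<forall>m. 1 \<le> m \<and> m \<le> s \<longrightarrow> A m \<union> {p} \<supseteq> A (m + 1)) \<and>
      (\<forall>m. m \<ge> s + 1 \<longrightarrow> A m \<supseteq> A (m + 1)))" using s by blast
qed



theorem proposition4p10:
  fixes I :: "('v::finite, 'k::field) mpoly set"
    and h :: "('v, 'k) mpoly"
  assumes "monomial_ideal I"
    and "is_monomial h"
    and "\<forall>u \<in> min_mon_gens I. gcd_one h u"
  shows "nearly_copersistent I \<longleftrightarrow> nearly_copersistent ((\<lambda>f. h * f) ` I)"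
proof (cases "I = {0}")
  case True
  then have "(\<lambda>f. h * f) ` I = I" by simp
  then show ?thesis by simp
next
  case False
  have Ii: "is_ideal I" using assms(1) unfolding monomial_ideal_def by auto
  obtain a where ha: "h = monom a" using assms(2) unfolding is_monomial_def by auto
  have gc: "\<forall>u \<in> min_mon_gens I. gcd_one (monom a) u" using assms(3) ha by simp
  have "\<exists>u \<in> I. is_monomial u"
  proof (rule ccontr)
    assume "\<not> (\<exists>u \<in> I. is_monomial u)"
    then have "{u \<in> I. is_monomial u} = {}" by auto
    then have E: "ideal_gen {u \<in> I. is_monomial u} = ideal_gen {}" by (rule arg_cong)
    have Ieq: "I = ideal_gen {u \<in> I. is_monomial u}" using assms(1) unfolding monomial_ideal_def by (rule conjunct2)
    have "I = ideal_gen {}" by (rule trans[OF Ieq E])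
    also have "\<dots> \<subseteq> {0}" by (rule ideal_gen_min[OF ideal_zero]) simp
    finally show False using False ideal_0[OF Ii] by auto
  qed
  then obtain b0 where "monom b0 \<in> I" unfolding is_monomial_def by auto
  then obtain v where v: "v \<in> min_mon_gens I" using exists_min_gen by blast
  then obtain b where vb: "v = monom b" unfolding min_mon_gens_def is_monomial_def by auto
  have cb: "clean a b" using gcd_one_clean gc v vb by metis
  have vI: "v \<in> I" using v unfolding min_mon_gens_def by auto
  have canc: "\<forall>x y. h * x = h * y \<longrightarrow> x = y" using ha monom_cancel by blast
  have BA: "Ass (ideal_pow ((\<lambda>f. h * f) ` I) m) = Ass (ideal_pow I m) \<union> Dh h" if "m \<ge> 1" for m
  proof -
    have "m \<noteq> 0" using that by simp
    then have "\<exists>k. m = Suc k" by (rule not0_implies_Suc)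
    then obtain k where k: "m = Suc k" by (elim exE)
    obtain G where G: "ideal_pow I m = ideal_gen G" "G \<subseteq> CleanMon a"
      using pow_clean_gen[OF assms(1) gc] by blast
    have nzd: "\<forall>f. h * f \<in> ideal_pow I m \<longrightarrow> f \<in> ideal_pow I m"
      using nzd_clean[OF G(2)] G(1) ha by simp
    have u: "v ^ m \<in> ideal_pow I m" by (rule pow_in_ideal_pow[OF vI])
    have up: "\<forall>y. h dvd v ^ m * y \<longrightarrow> h dvd y"
    proof (intro allI impI)
      fix y assume "h dvd v ^ m * y"
      then have "monom a dvd monom b ^ m * y" using ha vb by simp
      then have "monom a dvd y" by (rule upow_prop[OF cb])
      then show "h dvd y" using ha by simp
    qed
    have "ideal_pow ((\<lambda>f. h * f) ` I) m = (\<lambda>f. h ^ m * f) ` ideal_pow I m"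
      by (rule ideal_pow_image[OF Ii])
    then show ?thesis using Ass_image[OF canc ideal_pow_ideal nzd u up k] by simp
  qed
  have dis: "Ass (ideal_pow I m) \<inter> Dh h = {}" if "m \<ge> 1" for m
  proof -
    obtain G where G: "ideal_pow I m = ideal_gen G" "G \<subseteq> CleanMon a"
      using pow_clean_gen[OF assms(1) gc] by blast
    have nzd: "\<forall>f. h * f \<in> ideal_pow I m \<longrightarrow> f \<in> ideal_pow I m"
      using nzd_clean[OF G(2)] G(1) ha by simp
    show ?thesis by (rule Ass_Dh_disjoint[OF ideal_pow_ideal nzd])
  qed
  show ?thesis
    unfolding nearly_copersistent_def
    by (rule cond_equiv[where A="\<lambda>m. Ass (ideal_pow I m)" and B="\<lambda>m. Ass (ideal_pow ((\<lambda>f. h * f) ` I) m)"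
          and D="Dh h", OF BA dis])
qed

end
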